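(* Let $d\ge2$, $p\ge1$ and $k\in\mathbb{N}$ with $k\ge d^{6p}$. Define $\phi:\mathcal{C}_k^{(d)}\to\mathbb{R}$ by $$\phi(T):=1-\prod_{m=1}^\infty\frac{N_{\le m(p-1)}(T)}{dk+1}.$$ Then for every $T\in\mathcal{C}_k^{(d)}$, $|1-\phi(T)|\le\exp(-c_{d,p}\log^2k)$, where $c_{d,p}:=(4p\log d)^{-1}$.
   Context: A $d$-Catalan tree is a rooted planar tree in which each vertex has $0$ or $d$ children; $\mathcal{C}_k^{(d)}$ is the set of those with $k$ internal vertices (so $dk+1$ vertices in total). $N_j(T)$ is the number of vertices at distance $j$ from the root and $N_{\le q}(T)=\sum_{0\le j\le q}N_j(T)$. *)

theory Defs
  imports Complex_Main
begin

datatype ptree = Node "ptree list"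

fun dcatalan :: "nat \<Rightarrow> ptree \<Rightarrow> bool" where
  "dcatalan d (Node ts) = ((ts = [] \<or> length ts = d) \<and> (\<forall>t\<in>set ts. dcatalan d t))"

fun internal :: "ptree \<Rightarrow> nat" where
  "internal (Node ts) = (if ts = [] then 0 else 1) + sum_list (map internal ts)"

fun level :: "ptree \<Rightarrow> nat \<Rightarrow> nat" where
  "level (Node ts) 0 = 1"
| "level (Node ts) (Suc j) = sum_list (map (\<lambda>t. level t j) ts)"

definition N_le :: "ptree \<Rightarrow> nat \<Rightarrow> nat" where
  "N_le T q = (\<Sum>j\<le>q. level T j)"

definition phi :: "nat \<Rightarrow> nat \<Rightarrow> nat \<Rightarrow> ptree \<Rightarrow> real" where
  "phi d p k T = 1 - lim (\<lambda>n. \<Prod>m\<in>{1..n}. real (N_le T (m * (p - 1))) / real (d * k + 1))"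

end

theory Submission
  imports Defs
begin

fun vsize :: "ptree \<Rightarrow> nat" where
  "vsize (Node ts) = 1 + sum_list (map vsize ts)"

lemma level_le_pow:
  assumes "dcatalan d T" shows "level T j \<le> d ^ j"
  using assms
proof (induction T arbitrary: j)
  case (Node ts)
  show ?case
  proof (cases j)
    case 0 then show ?thesis by simp
  next
    case (Suc i)
    have "sum_list (map (\<lambda>t. level t i) ts) \<le> sum_list (map (\<lambda>t. d ^ i) ts)"
      by (rule sum_list_mono) (use Node in auto)
    also have "\<dots> = length ts * d ^ i" by (simp add: sum_list_triv)
    also have "\<dots> \<le> d * d ^ i" using Node.prems by auto
    finally show ?thesis using Suc by simp
  qed
qed

lemma N_le_pow:
  assumes "dcatalan d T" "d \<ge> 2" shows "N_le T j \<le> d ^ (j + 1)"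
proof -
  have "(\<Sum>i\<le>j. d ^ i) \<le> d ^ (j + 1)" for j
  proof (induction j)
    case 0 then show ?case using assms by simp
  next
    case (Suc j)
    have "(\<Sum>i\<le>Suc j. d ^ i) = (\<Sum>i\<le>j. d ^ i) + d ^ (j+1)" by simp
    also have "\<dots> \<le> 2 * d ^ (j+1)" using Suc by simp
    also have "\<dots> \<le> d * d ^ (j+1)" using assms by simp
    finally show ?case by simp
  qed
  moreover have "N_le T j \<le> (\<Sum>i\<le>j. d ^ i)"
    unfolding N_le_def by (rule sum_mono) (use level_le_pow assms in auto)
  ultimately show ?thesis by (meson order_trans)
qed

lemma swap_lemma:
  "(\<Sum>i\<le>j. sum_list (map (\<lambda>t. level t i) ts)) = sum_list (map (\<lambda>t. N_le t j) ts)"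
  by (induction ts) (auto simp: sum.distrib N_le_def)

lemma N_le_vsize: "N_le T j \<le> vsize T"
proof (induction T arbitrary: j)
  case (Node ts)
  show ?case
  proof (cases j)
    case 0 then show ?thesis by (simp add: N_le_def)
  next
    case (Suc i)
    have "N_le (Node ts) (Suc i) = 1 + (\<Sum>i'\<le>i. level (Node ts) (Suc i'))"
      unfolding N_le_def by (subst sum.atMost_Suc_shift) simp
    also have "\<dots> = 1 + sum_list (map (\<lambda>t. N_le t i) ts)"
      using swap_lemma by simp
    also have "\<dots> \<le> 1 + sum_list (map vsize ts)"
      using sum_list_mono[of ts "\<lambda>t. N_le t i" vsize] Node.IH by auto
    finally show ?thesis using Suc by simp
  qed
qed

lemma vsize_dcat:
  assumes "dcatalan d T" shows "vsize T = d * internal T + 1"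
  using assms
proof (induction T)
  case (Node ts)
  show ?case
  proof (cases "ts = []")
    case True then show ?thesis by simp
  next
    case False
    then have len: "length ts = d" using Node.prems by auto
    have "sum_list (map vsize ts) = sum_list (map (\<lambda>t. d * internal t + 1) ts)"
      by (rule arg_cong[where f=sum_list], rule map_cong) (use Node in auto)
    also have "\<dots> = d * sum_list (map internal ts) + length ts"
      by (induction ts) (auto simp: algebra_simps)
    finally show ?thesis using False len by (simp add: algebra_simps)
  qed
qed

lemma key_ineq:
  fixes x p :: real and M :: nat
  assumes "x \<ge> 6" "p \<ge> 1" "real M \<ge> x - 1" "real M \<le> x"
  shows "(p - 1) * (real M * (real M + 1) / 2) - real M * x * p \<le> - (x^2 * p / 4)"
proof -
  have "(p-1) * (real M + 1) / 2 \<le> (p-1) * (x+1) / 2"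
    using assms by (intro divide_right_mono mult_left_mono) auto
  hence h1: "p*x - (p-1) * (real M + 1) / 2 \<ge> (p+1)*(x-1)/2"
    by (simp add: field_simps) 
  have h2: "real M * (p*x - (p-1) * (real M + 1) / 2) \<ge> (x-1) * ((p+1)*(x-1)/2)"
    using h1 assms by (intro mult_mono) auto
  have h3: "(x-1)^2 \<ge> 25/36 * x^2" 
  proof -
    have "5/6*x \<le> x - 1" "0 \<le> 5/6*x" using assms by auto
    hence "(5/6*x)^2 \<le> (x-1)^2" by (rule power_mono)
    thus ?thesis by (simp add: power2_eq_square)
  qed
  have "(x-1) * ((p+1)*(x-1)/2) = (p+1) * (x-1)^2 / 2" by (simp add: power2_eq_square)
  also have "\<dots> \<ge> (p+1) * (25/36 * x^2) / 2" using h3 assms by (intro divide_right_mono mult_left_mono) auto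
  finally have "real M * (p*x - (p-1) * (real M + 1) / 2) \<ge> (p+1) * (25/36 * x^2) / 2" using h2 by linarith
  moreover have "(p+1) * (25/36 * x^2) / 2 \<ge> x^2 * p / 4" using assms
    by (simp add: field_simps)
  moreover have "real M * (p*x - (p-1)*(real M+1)/2) = real M * x * p - (p-1)*(real M*(real M+1)/2)"
    by (simp add: algebra_simps)
  ultimately show ?thesis by linarith
qed

lemma gauss_real: "(\<Sum>m\<in>{1..M}. real m) = real M * (real M + 1) / 2"
  by (induction M) (auto simp: field_simps)

theorem lemma6p4:
  fixes d p k :: nat and T :: ptree
  assumes "d \<ge> 2" and "p \<ge> 1" and "k \<ge> d ^ (6 * p)"
    and "dcatalan d T" and "internal T = k"
  shows "\<bar>1 - phi d p k T\<bar> \<le> exp (- (1 / (4 * real p * ln (real d))) * (ln (real k))\<^sup>2)"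
proof -
  define f where "f m = real (N_le T (m * (p - 1))) / real (d * k + 1)" for m
  define P where "P n = (\<Prod>m\<in>{1..n}. f m)" for n
  have kpos: "k \<ge> 1" using assms(3) assms(1) by (metis le_trans one_le_power le_trans order.trans one_le_numeral Suc_1 Suc_leD)
  have f0: "f m \<ge> 0" for m unfolding f_def by simp
  have f1: "f m \<le> 1" for m
  proof -
    have "N_le T (m * (p - 1)) \<le> d * k + 1"
      using N_le_vsize vsize_dcat assms by metis
    then have "real (N_le T (m * (p - 1))) \<le> real (d * k + 1)" by (rule of_nat_mono)
    then show ?thesis unfolding f_def by (simp add: divide_le_eq del: of_nat_add of_nat_mult)
  qed
  have fb: "f m \<le> real d ^ (m * (p - 1)) / real k" for m
  proof -
    have "real (N_le T (m * (p - 1))) \<le> real d ^ (m * (p - 1) + 1)"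
      using N_le_pow[OF assms(4) assms(1)] by (metis of_nat_le_iff of_nat_power)
    moreover have "real (d*k) \<le> real (d * k + 1)" by simp
    ultimately have "f m \<le> real d ^ (m * (p - 1) + 1) / real (d * k)"
      unfolding f_def using kpos assms(1)
      by (intro frac_le) auto
    also have "\<dots> = real d ^ (m * (p - 1)) / real k" using assms(1) by simp
    finally show ?thesis .
  qed
  have P0: "P n \<ge> 0" for n unfolding P_def using f0 by (simp add: prod_nonneg)
  have dec: "decseq P"
  proof (rule decseq_SucI)
    fix n
    have "P (Suc n) = P n * f (Suc n)" unfolding P_def by (simp add: prod.nat_ivl_Suc')
    also have "\<dots> \<le> P n" using P0 f1 by (simp add: mult_left_le)
    finally show "P (Suc n) \<le> P n" .
  qed
  obtain L where L: "P \<longlonglongrightarrow> L" "\<And>i. L \<le> P i"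
    using decseq_convergent[OF dec, of 0] P0 by blast
  have L0: "L \<ge> 0" using L(1) P0 by (meson LIMSEQ_le_const)
  have phiL: "1 - phi d p k T = L"
    unfolding phi_def using L(1) limI unfolding P_def f_def by auto
  define lam where "lam = ln (real d)"
  define K where "K = ln (real k)"
  have lam0: "lam > 0" unfolding lam_def using assms(1) by simp
  have K6: "K \<ge> 6 * real p * lam"
  proof -
    have "real d ^ (6*p) \<le> real k" using assms(3) by (metis of_nat_le_iff of_nat_power)
    hence "ln (real d ^ (6*p)) \<le> K" unfolding K_def using assms(1) kpos by (subst ln_le_cancel_iff) auto
    thus ?thesis using assms(1) by (simp add: lam_def ln_realpow)
  qed
  define x where "x = K / (real p * lam)"
  have pl: "real p * lam > 0" using lam0 assms(2) by simp
  have x6: "x \<ge> 6" unfolding x_def using K6 pl by (simp add: le_divide_eq mult.commute mult.left_commute)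
  define M where "M = nat \<lfloor>x\<rfloor>"
  have M1: "real M \<ge> x - 1" "real M \<le> x" unfolding M_def using x6 by linarith+
  have "P M \<le> (\<Prod>m\<in>{1..M}. real d ^ (m * (p - 1)) / real k)"
    unfolding P_def by (rule prod_mono) (use f0 fb in auto)
  also have "\<dots> = (\<Prod>m\<in>{1..M}. exp (real m * (real p - 1) * lam - K))"
  proof (rule prod.cong)
    fix m assume "m \<in> {1..M}"
    have "real d ^ (m * (p - 1)) / real k = exp (ln (real d ^ (m * (p - 1)) / real k))"
      using assms(1) kpos by simp
    also have "\<dots> = exp (real m * (real p - 1) * lam - K)"
      using assms(1,2) kpos by (simp add: ln_div ln_realpow lam_def K_def of_nat_diff)
    finally show "real d ^ (m * (p - 1)) / real k = exp (real m * (real p - 1) * lam - K)" .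
  qed simp
  also have "\<dots> = exp (\<Sum>m\<in>{1..M}. real m * (real p - 1) * lam - K)"
    by (simp add: exp_sum)
  also have "(\<Sum>m\<in>{1..M}. real m * (real p - 1) * lam - K) = lam * ((real p - 1) * (real M * (real M + 1) / 2) - real M * x * real p)"
  proof -
    have "(\<Sum>m\<in>{1..M}. real m * (real p - 1) * lam - K) = (\<Sum>m\<in>{1..M}. real m) * ((real p - 1) * lam) - real M * K"
      by (simp add: sum_subtractf sum_distrib_right mult.assoc)
    also have "\<dots> = (real M * (real M + 1) / 2) * ((real p - 1) * lam) - real M * K"
      by (subst gauss_real) simp
    finally have s2: "(\<Sum>m\<in>{1..M}. real m * (real p - 1) * lam - K) = (real M * (real M + 1) / 2) * ((real p - 1) * lam) - real M * K" .
    have Kx: "K = x * real p * lam" unfolding x_def using lam0 assms(2) by (simp add: field_simps)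
    show ?thesis unfolding s2 unfolding Kx by (simp add: algebra_simps)
  qed
  also have "exp \<dots> \<le> exp (lam * (- (x^2 * real p / 4)))"
  proof -
    have "(real p - 1) * (real M * (real M + 1) / 2) - real M * x * real p \<le> - (x^2 * real p / 4)"
      using key_ineq[OF x6 _ M1, of "real p"] assms(2) by simp
    hence "lam * ((real p - 1) * (real M * (real M + 1) / 2) - real M * x * real p) \<le> lam * (- (x^2 * real p / 4))"
      using lam0 by (intro mult_left_mono) auto
    thus ?thesis by simp
  qed
  also have "lam * (- (x^2 * real p / 4)) = - (1 / (4 * real p * lam)) * K\<^sup>2"
    using pl unfolding x_def by (simp add: field_simps power2_eq_square)
  finally have "P M \<le> exp (- (1 / (4 * real p * ln (real d))) * (ln (real k))\<^sup>2)"
    unfolding lam_def K_def .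
  then show ?thesis using phiL L0 L(2)[of M] by simp
qed

end
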